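(* Let $v\in S$ be a point with at least one irrational coordinate whose itinerary $\mathbb{X}_{a_1},\mathbb{X}_{a_2},\dots$ satisfies: $\mathbb{X}_{a_k}$ is of type $\mathbb{A}$ for all $k\ge m$, for some $m\ge1$. Then $G^{m-1}(v)$ lies on the edge $\{(x,0,0):0\le x\le1\}$ of $S$.
   Context: Let $S = \{(x,y,z)\in\mathbb{R}^3 : 0\le z\le y\le x\le 1\}$. For integers $n\ge1$ define $\mathbb{A}_n = \{\frac1{n+1} < x \le \frac1n,\ 0\le z\le y\le 1-nx\}$, $\mathbb{B}_n = \{0\le z\le 1-nx < y \le x\}$, $\mathbb{C}_n = \{1-nx < z \le y \le x \le \frac1n\}$; together with $\{(0,0,0)\}$ they partition $S$. The 3-dimensional Gauss map $G:S\to S$ is $G(0,0,0)=(0,0,0)$, $G(x,y,z)=\left(\frac1x-n,\frac yx,\frac zx\right)$ on $\mathbb{A}_n$, $G(x,y,z)=\left(\frac{1-y}{x}-n+1,\frac{x-y+z}{x},\frac{x-y}{x}\right)$ on $\mathbb{B}_n$, $G(x,y,z)=\left(\frac{1-z}{x}-n+1,\frac{x-z}{x},\frac{y-z}{x}\right)$ on $\mathbb{C}_n$. For a point $v$ whose forward orbit never hits the origin, its itinerary is the sequence $\mathbb{X}_{a_1},\mathbb{X}_{a_2},\dots$ ($\mathbb{X}\in\{\mathbb{A},\mathbb{B},\mathbb{C}\}$) with $G^{k-1}(v)\in\mathbb{X}_{a_k}$. *)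

theory Defs
  imports Complex_Main
begin

type_synonym pt = "real \<times> real \<times> real"

definition S3 :: "pt set" where
  "S3 = {(x,y,z). 0 \<le> z \<and> z \<le> y \<and> y \<le> x \<and> x \<le> 1}"

definition regA :: "nat \<Rightarrow> pt set" where
  "regA n = {(x,y,z). 1 / real (n+1) < x \<and> x \<le> 1 / real n \<and>
                      0 \<le> z \<and> z \<le> y \<and> y \<le> 1 - real n * x}"

definition regB :: "nat \<Rightarrow> pt set" where
  "regB n = {(x,y,z). 0 \<le> z \<and> z \<le> 1 - real n * x \<and> 1 - real n * x < y \<and> y \<le> x}"

definition regC :: "nat \<Rightarrow> pt set" where
  "regC n = {(x,y,z). 1 - real n * x < z \<and> z \<le> y \<and> y \<le> x \<and> x \<le> 1 / real n}"

text \<open>The 3-dimensional Gauss map. Points outside S (never reached from S) are left fixed.\<close>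
definition G3 :: "pt \<Rightarrow> pt" where
  "G3 p = (case p of (x,y,z) \<Rightarrow>
     if p = (0,0,0) then (0,0,0)
     else if \<exists>n\<ge>1. p \<in> regA n then
       (let n = real (THE n. n \<ge> 1 \<and> p \<in> regA n) in (1/x - n, y/x, z/x))
     else if \<exists>n\<ge>1. p \<in> regB n then
       (let n = real (THE n. n \<ge> 1 \<and> p \<in> regB n) in ((1-y)/x - n + 1, (x-y+z)/x, (x-y)/x))
     else if \<exists>n\<ge>1. p \<in> regC n then
       (let n = real (THE n. n \<ge> 1 \<and> p \<in> regC n) in ((1-z)/x - n + 1, (x-z)/x, (y-z)/x))
     else p)"

definition itin_is_A :: "pt \<Rightarrow> nat \<Rightarrow> bool" where
  "itin_is_A v k \<longleftrightarrow> (\<exists>n\<ge>1. (G3 ^^ (k - 1)) v \<in> regA n)"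

end

theory Submission
  imports Defs
begin

lemma regA_unique:
  assumes "p \<in> regA n" "p \<in> regA n'" "n \<ge> 1" "n' \<ge> 1"
  shows "n = n'"
proof -
  obtain x y z where p: "p = (x,y,z)" by (cases p) auto
  have a: "1 / real (n+1) < x" "x \<le> 1 / real n" "1 / real (n'+1) < x" "x \<le> 1 / real n'"
    using assms(1,2) by (auto simp: regA_def p)
  have "1 / real (n+1) < 1 / real n'" using a by linarith
  hence "real n' < real (n+1)" using assms by (simp add: frac_less_eq field_simps)
  moreover have "1 / real (n'+1) < 1 / real n" using a by linarith
  hence "real n < real (n'+1)" using assms by (simp add: frac_less_eq field_simps)
  ultimately show ?thesis by linarith
qed

lemma G3_A:
  assumes "(x,y,z) \<in> regA n" "n \<ge> 1"
  shows "G3 (x,y,z) = (1/x - real n, y/x, z/x)"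
proof -
  have x0: "1 / real (n+1) < x" using assms(1) by (simp add: regA_def)
  have "0 < 1 / real (n+1)" by simp
  hence x: "x > 0" using x0 by linarith
  have th: "(THE n. n \<ge> 1 \<and> (x,y,z) \<in> regA n) = n"
    using assms regA_unique by blast
  have "(x,y,z) \<noteq> (0,0,0)" using x by auto
  moreover have "\<exists>n\<ge>1. (x,y,z) \<in> regA n" using assms by blast
  ultimately show ?thesis using th unfolding G3_def by (auto simp: Let_def)
qed

theorem mainTheorem15:
  fixes v :: pt and m :: nat
  assumes "v \<in> S3"
    and "fst v \<notin> \<rat> \<or> fst (snd v) \<notin> \<rat> \<or> snd (snd v) \<notin> \<rat>"
    and "\<forall>k. (G3 ^^ k) v \<noteq> (0,0,0)"
    and "m \<ge> 1"
    and "\<forall>k\<ge>m. itin_is_A v k"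
  shows "\<exists>x. (G3 ^^ (m - 1)) v = (x, 0, 0) \<and> 0 \<le> x \<and> x \<le> 1"
proof -
  define q where "q k = (G3 ^^ (k + (m-1))) v" for k
  define X where "X k = fst (q k)" for k
  define Y where "Y k = fst (snd (q k))" for k
  define Z where "Z k = snd (snd (q k))" for k
  have qe: "q k = (X k, Y k, Z k)" for k by (simp add: X_def Y_def Z_def)
  have inA: "\<exists>n\<ge>1. q k \<in> regA n" for k
  proof -
    have "itin_is_A v (k+m)" using assms(5) by simp
    moreover have "k + m - 1 = k + (m-1)" using assms(4) by simp
    ultimately show ?thesis by (simp add: itin_is_A_def q_def)
  qed
  have qS: "q (Suc k) = G3 (q k)" for k by (simp add: q_def)
  have props: "0 < X k \<and> X k \<le> 1 \<and> 0 \<le> Z k \<and> Z k \<le> Y k \<and> Y k \<le> 1 \<and>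
      Y (Suc k) = Y k / X k \<and> X k * X (Suc k) \<le> 1/2" for k
  proof -
    obtain n where n: "n \<ge> 1" "q k \<in> regA n" using inA by blast
    hence r: "1 / real (n+1) < X k" "X k \<le> 1 / real n" "0 \<le> Z k" "Z k \<le> Y k"
      "Y k \<le> 1 - real n * X k"
      by (auto simp: regA_def qe)
    have "0 < 1 / real (n+1)" by simp
    hence xp: "X k > 0" using r(1) by linarith
    have "1 / real n \<le> 1" using n(1) by simp
    hence x1: "X k \<le> 1" using r(2) by linarith
    have nx: "real n * X k \<le> 1" using r(2) n(1) by (simp add: field_simps)
    have g: "q (Suc k) = (1 / X k - real n, Y k / X k, Z k / X k)"
      using G3_A[of "X k" "Y k" "Z k" n] n qS[of k] by (simp add: qe)
    hence XS: "X (Suc k) = 1 / X k - real n" and YS: "Y (Suc k) = Y k / X k"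
      by (auto simp: X_def Y_def)
    obtain n2 where n2: "n2 \<ge> 1" "q (Suc k) \<in> regA n2" using inA by blast
    have "X (Suc k) \<le> 1 / real n2" using n2 by (auto simp: regA_def qe)
    moreover have "1 / real n2 \<le> 1" using n2(1) by simp
    ultimately have xs1: "X (Suc k) \<le> 1" by linarith
    have pe: "X k * X (Suc k) = 1 - real n * X k" using XS xp by (simp add: field_simps)
    have p1: "X k * X (Suc k) \<le> X k" using xs1 xp by (simp add: mult_left_le)
    have "X k \<le> real n * X k" using n(1) xp by simp
    hence p2: "X k * X (Suc k) \<le> 1 - X k" using pe by linarith
    have "X k * X (Suc k) \<le> 1/2" using p1 p2 by linarith
    moreover have "0 \<le> real n * X k" using xp by simp
    moreover have "Z k \<le> Y k" "Y k \<le> 1" "0 \<le> Z k" using r calculation(2) by linarith+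
    ultimately show ?thesis using xp x1 YS by simp
  qed
  have dbl: "Y (Suc (Suc k)) \<ge> 2 * Y k" for k
  proof -
    have a: "Y (Suc (Suc k)) = Y k / (X k * X (Suc k))"
      using props[of k] props[of "Suc k"] by simp
    have b: "0 < X k * X (Suc k)" using props[of k] props[of "Suc k"] by simp
    have "2 * Y k * (X k * X (Suc k)) \<le> Y k"
      using props[of k] mult_left_mono[of "X k * X (Suc k)" "1/2" "2 * Y k"] by simp
    thus ?thesis using a b by (simp add: field_simps)
  qed
  have pow: "Y (2*j) \<ge> 2^j * Y 0" for j
  proof (induction j)
    case 0 thus ?case by simp
  next
    case (Suc j)
    have "Y (2 * Suc j) = Y (Suc (Suc (2*j)))" by simp
    thus ?case using dbl[of "2*j"] Suc by simp
  qed
  have Y0: "Y 0 = 0"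
  proof (rule ccontr)
    assume "Y 0 \<noteq> 0"
    hence yp: "Y 0 > 0" using props[of 0] by linarith
    obtain j where j: "1 / Y 0 < 2 ^ j" using real_arch_pow[of 2 "1 / Y 0"] by auto
    have "1 < 2^j * Y 0" using j yp by (simp add: field_simps)
    moreover have "Y (2*j) \<le> 1" using props by blast
    ultimately show False using pow[of j] by linarith
  qed
  have Z0: "Z 0 = 0" using props[of 0] Y0 by linarith
  have "(G3 ^^ (m - 1)) v = q 0" by (simp add: q_def)
  thus ?thesis using qe[of 0] Y0 Z0 props[of 0] by (intro exI[of _ "X 0"]) auto
qed

end
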